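(* Let $q\in\mathrm{prob}(\{0,1\}^2)$. The set $B_\le:=\{(\pi_1,\chi^{(1)}_{1|1},\chi^{(2)}_{1|1}):(\pi,\chi)\in\Theta_2,\ \mu(\pi,\chi)=q,\ \chi^{(1)}_{0|0}\le\chi^{(2)}_{0|0}\}$ is nonempty and equals the set of all $(\mathrm{Pr},\mathrm{Se}_1,\mathrm{Se}_2)\in[0,1]^3$ satisfying $-q_{00}\le\mathrm{Pr}(\mathrm{Se}_1+\mathrm{Se}_2-1)\le q_{11}$, $\mathrm{Pr}-q_{0+}\le\mathrm{Pr}\,\mathrm{Se}_1\le q_{1+}$, $\mathrm{Pr}-q_{+0}\le\mathrm{Pr}\,\mathrm{Se}_2\le q_{+1}$, and $q_{01}-q_{10}\le\mathrm{Pr}(\mathrm{Se}_2-\mathrm{Se}_1)\le q_{01}$.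
   Context: A subscript $+$ denotes summation over the replaced index. $\mathrm{prob}(\mathcal{X})$ is the set of probability densities on a finite set $\mathcal{X}$; $\mathrm{markov}(\mathcal{X},\mathcal{Y})$ the set of maps $(x,y)\mapsto p_{y|x}$ with $p_{\cdot|x}\in\mathrm{prob}(\mathcal{Y})$. $\Theta_2:=\mathrm{prob}(\{0,1\})\times\mathrm{markov}(\{0,1\},\{0,1\}^2)$, $\mu(\pi,\chi)_j:=\sum_{i=0}^1\pi_i\chi_{j|i}$ for $j\in\{0,1\}^2$, $\chi^{(1)}_{\iota|i}:=\chi_{\iota0|i}+\chi_{\iota1|i}$, $\chi^{(2)}_{\iota|i}:=\chi_{0\iota|i}+\chi_{1\iota|i}$. *)

theory Defs
  imports Complex_Main
begin

definition prob_on :: "'a set \<Rightarrow> ('a \<Rightarrow> real) \<Rightarrow> bool" where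
  "prob_on X p \<longleftrightarrow> (\<forall>x\<in>X. 0 \<le> p x) \<and> (\<Sum>x\<in>X. p x) = 1"

text \<open>Markov kernels: k x y stands for p_{y|x}.\<close>
definition markov_on :: "'a set \<Rightarrow> 'b set \<Rightarrow> ('a \<Rightarrow> 'b \<Rightarrow> real) \<Rightarrow> bool" where
  "markov_on X Y k \<longleftrightarrow> (\<forall>x\<in>X. prob_on Y (k x))"

definition bits :: "nat set" where "bits = {0, 1}"

definition Theta2 :: "((nat \<Rightarrow> real) \<times> (nat \<Rightarrow> nat \<times> nat \<Rightarrow> real)) set" where
  "Theta2 = {(\<pi>, \<chi>). prob_on bits \<pi> \<and> markov_on bits (bits \<times> bits) \<chi>}"

definition mu :: "(nat \<Rightarrow> real) \<Rightarrow> (nat \<Rightarrow> nat \<times> nat \<Rightarrow> real) \<Rightarrow> nat \<times> nat \<Rightarrow> real" where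
  "mu \<pi> \<chi> j = (\<Sum>i\<in>bits. \<pi> i * \<chi> i j)"

text \<open>chi1 \<chi> \<iota> i = \<chi>^(1)_{\<iota>|i},  chi2 \<chi> \<iota> i = \<chi>^(2)_{\<iota>|i}\<close>
definition chi1 :: "(nat \<Rightarrow> nat \<times> nat \<Rightarrow> real) \<Rightarrow> nat \<Rightarrow> nat \<Rightarrow> real" where
  "chi1 \<chi> \<iota> i = \<chi> i (\<iota>, 0) + \<chi> i (\<iota>, 1)"

definition chi2 :: "(nat \<Rightarrow> nat \<times> nat \<Rightarrow> real) \<Rightarrow> nat \<Rightarrow> nat \<Rightarrow> real" where
  "chi2 \<chi> \<iota> i = \<chi> i (0, \<iota>) + \<chi> i (1, \<iota>)"

end

theory Submission
  imports Defs
begin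

lemma sum_bits: "(\<Sum>x\<in>bits. f x) = (f 0 + f 1 :: real)"
  by (simp add: bits_def)

lemma bits2: "bits \<times> bits = {(0,0),(0,1),(1,0),(1,1)}"
  by (auto simp: bits_def)

lemma sum_bits2: "(\<Sum>x\<in>bits\<times>bits. f x) = (f(0,0) + f(0,1) + f(1,0) + f(1,1) :: real)"
  by (simp add: bits2)

lemma ball_bits2: "(\<forall>j\<in>bits\<times>bits. P j) \<longleftrightarrow> P(0,0) \<and> P(0,1) \<and> P(1,0) \<and> P(1,1)"
  by (simp add: bits2)

lemma prob_bits2: "prob_on (bits\<times>bits) p \<longleftrightarrow> p(0,0) \<ge> 0 \<and> p(0,1) \<ge> 0 \<and> p(1,0) \<ge> 0 \<and> p(1,1) \<ge> 0
   \<and> p(0,0) + p(0,1) + p(1,0) + p(1,1) = 1"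
  unfolding prob_on_def sum_bits2 ball_bits2 by auto

lemma prob_bits: "prob_on bits p \<longleftrightarrow> p 0 \<ge> 0 \<and> p 1 \<ge> 0 \<and> p 0 + p 1 = 1"
  unfolding prob_on_def sum_bits by (auto simp: bits_def)

lemma Theta2_iff: "(\<pi>,\<chi>) \<in> Theta2 \<longleftrightarrow> prob_on bits \<pi> \<and> prob_on (bits\<times>bits) (\<chi> 0) \<and> prob_on (bits\<times>bits) (\<chi> 1)"
  by (simp add: Theta2_def markov_on_def bits_def)

lemma mu_eq: "mu \<pi> \<chi> j = \<pi> 0 * \<chi> 0 j + \<pi> 1 * \<chi> 1 j"
  by (simp add: mu_def sum_bits)

theorem lemma8:
  fixes q :: "nat \<times> nat \<Rightarrow> real"
  assumes "prob_on (bits \<times> bits) q"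
  defines "B \<equiv> {(\<pi> 1, chi1 \<chi> 1 1, chi2 \<chi> 1 1) | \<pi> \<chi>.
                   (\<pi>, \<chi>) \<in> Theta2 \<and> (\<forall>j\<in>bits \<times> bits. mu \<pi> \<chi> j = q j) \<and>
                   chi1 \<chi> 0 0 \<le> chi2 \<chi> 0 0}"
  shows "B \<noteq> {} \<and>
    B = {(Pr, Se1, Se2). Pr \<in> {0..1} \<and> Se1 \<in> {0..1} \<and> Se2 \<in> {0..1} \<and>
         - q (0,0) \<le> Pr * (Se1 + Se2 - 1) \<and> Pr * (Se1 + Se2 - 1) \<le> q (1,1) \<and>
         Pr - (q (0,0) + q (0,1)) \<le> Pr * Se1 \<and> Pr * Se1 \<le> q (1,0) + q (1,1) \<and>
         Pr - (q (0,0) + q (1,0)) \<le> Pr * Se2 \<and> Pr * Se2 \<le> q (0,1) + q (1,1) \<and>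
         q (0,1) - q (1,0) \<le> Pr * (Se2 - Se1) \<and> Pr * (Se2 - Se1) \<le> q (0,1)}"
    (is "_ \<and> B = ?R")
proof -
  have q: "q(0,0) \<ge> 0" "q(0,1) \<ge> 0" "q(1,0) \<ge> 0" "q(1,1) \<ge> 0"
     "q(0,0) + q(0,1) + q(1,0) + q(1,1) = 1" using assms(1) unfolding prob_bits2 by auto
  have sub: "B \<subseteq> ?R"
  proof
    fix z assume "z \<in> B"
    then obtain \<pi> \<chi> where z: "z = (\<pi> 1, chi1 \<chi> 1 1, chi2 \<chi> 1 1)" and th: "(\<pi>, \<chi>) \<in> Theta2"
      and m: "\<forall>j\<in>bits \<times> bits. mu \<pi> \<chi> j = q j" and c: "chi1 \<chi> 0 0 \<le> chi2 \<chi> 0 0"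
      unfolding B_def by blast
    have p: "\<pi> 0 \<ge> 0" "\<pi> 1 \<ge> 0" "\<pi> 0 + \<pi> 1 = 1" using th by (auto simp: Theta2_iff prob_bits)
    have c0: "\<chi> 0 (0,0) \<ge> 0" "\<chi> 0 (0,1) \<ge> 0" "\<chi> 0 (1,0) \<ge> 0" "\<chi> 0 (1,1) \<ge> 0"
      "\<chi> 0 (0,0) + \<chi> 0 (0,1) + \<chi> 0 (1,0) + \<chi> 0 (1,1) = 1"
      using th by (auto simp: Theta2_iff prob_bits2)
    have c1: "\<chi> 1 (0,0) \<ge> 0" "\<chi> 1 (0,1) \<ge> 0" "\<chi> 1 (1,0) \<ge> 0" "\<chi> 1 (1,1) \<ge> 0"
      "\<chi> 1 (0,0) + \<chi> 1 (0,1) + \<chi> 1 (1,0) + \<chi> 1 (1,1) = 1"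
      using th by (auto simp: Theta2_iff prob_bits2)
    define x where "x j = \<pi> 1 * \<chi> 1 j" for j
    define y where "y j = \<pi> 0 * \<chi> 0 j" for j
    have xn: "x(0,0) \<ge> 0" "x(0,1) \<ge> 0" "x(1,0) \<ge> 0" "x(1,1) \<ge> 0"
      using c1 p unfolding x_def by auto
    have yn: "y(0,0) \<ge> 0" "y(0,1) \<ge> 0" "y(1,0) \<ge> 0" "y(1,1) \<ge> 0"
      using c0 p unfolding y_def by auto
    have xs: "x(0,0) + x(0,1) + x(1,0) + x(1,1) = \<pi> 1"
      unfolding x_def using c1(5) by (metis distrib_left mult.right_neutral)
    have qq: "q j = y j + x j" if "j \<in> bits \<times> bits" for j
      using m that unfolding mu_eq x_def y_def by (metis add.commute)
    have qs: "q(0,0) = y(0,0) + x(0,0)" "q(0,1) = y(0,1) + x(0,1)"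
       "q(1,0) = y(1,0) + x(1,0)" "q(1,1) = y(1,1) + x(1,1)"
      using qq by (auto simp: bits_def)
    have fg: "y(0,1) \<le> y(1,0)"
      using c p unfolding y_def chi1_def chi2_def by (simp add: mult_left_mono)
    have A: "\<pi> 1 * chi1 \<chi> 1 1 = x(1,0) + x(1,1)"
      unfolding chi1_def x_def by (simp add: distrib_left)
    have C: "\<pi> 1 * chi2 \<chi> 1 1 = x(0,1) + x(1,1)"
      unfolding chi2_def x_def by (simp add: distrib_left)
    have s1: "chi1 \<chi> 1 1 \<in> {0..1}" "chi2 \<chi> 1 1 \<in> {0..1}"
      using c1 unfolding chi1_def chi2_def by auto
    have e1: "\<pi> 1 * (chi1 \<chi> 1 1 + chi2 \<chi> 1 1 - 1) = \<pi> 1 * chi1 \<chi> 1 1 + \<pi> 1 * chi2 \<chi> 1 1 - \<pi> 1"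
      by (simp add: algebra_simps)
    have e2: "\<pi> 1 * (chi2 \<chi> 1 1 - chi1 \<chi> 1 1) = \<pi> 1 * chi2 \<chi> 1 1 - \<pi> 1 * chi1 \<chi> 1 1"
      by (simp add: algebra_simps)
    show "z \<in> ?R" unfolding z using p s1 xn yn xs qs fg A C e1 e2
      apply (simp only: mem_Collect_eq case_prod_conv atLeastAtMost_iff)
      apply (intro conjI TrueI)
      apply linarith+
      done
  qed
  have sq: "S1 + S2 \<le> 1 + S1 * S2" "S1 * S2 \<le> S2" "S1 * S2 \<le> S1"
    if "0 \<le> S1" "S1 \<le> (1::real)" "0 \<le> S2" "S2 \<le> 1" for S1 S2
  proof -
    have "0 \<le> (1 - S1) * (1 - S2)" using that by simp
    then show "S1 + S2 \<le> 1 + S1 * S2" by (simp add: algebra_simps)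
    show "S1 * S2 \<le> S2" using that by (simp add: mult_left_le_one_le)
    show "S1 * S2 \<le> S1" using that by (simp add: mult_left_le)
  qed
  have sup: "?R \<subseteq> B"
  proof
    fix z assume "z \<in> ?R"
    then obtain P S1 S2 where z: "z = (P,S1,S2)" and P: "0 \<le> P" "P \<le> 1"
      and S: "0 \<le> S1" "S1 \<le> 1" "0 \<le> S2" "S2 \<le> 1"
      and h1: "- q (0,0) \<le> P * (S1 + S2 - 1)" "P * (S1 + S2 - 1) \<le> q (1,1)"
      and h2: "P - (q (0,0) + q (0,1)) \<le> P * S1" "P * S1 \<le> q (1,0) + q (1,1)"
      and h3: "P - (q (0,0) + q (1,0)) \<le> P * S2" "P * S2 \<le> q (0,1) + q (1,1)"
      and h4: "q (0,1) - q (1,0) \<le> P * (S2 - S1)" "P * (S2 - S1) \<le> q (0,1)"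
      by auto
    define A where "A = P * S1"
    define C where "C = P * S2"
    have AP: "A \<le> P" "C \<le> P" "0 \<le> A" "0 \<le> C"
      using P S unfolding A_def C_def by (auto simp: mult_left_le mult_nonneg_nonneg)
    have h1': "- q (0,0) \<le> A + C - P" "A + C - P \<le> q(1,1)"
      using h1 unfolding A_def C_def by (simp_all add: algebra_simps)
    have h4': "q (0,1) - q (1,0) \<le> C - A" "C - A \<le> q (0,1)"
      using h4 unfolding A_def C_def by (simp_all add: algebra_simps)
    note h2' = h2[folded A_def] and h3' = h3[folded C_def]
    define t where "t = max (max 0 (A - q(1,0))) (max (C - q(0,1)) (A + C - P))"
    define x where "x = (\<lambda>j::nat\<times>nat. if j = (1,1) then t else if j = (1,0) then A - t
        else if j = (0,1) then C - t else P - A - C + t)"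
    have x: "x(1,1) = t" "x(1,0) = A - t" "x(0,1) = C - t" "x(0,0) = P - A - C + t"
      unfolding x_def by auto
    have xb: "0 \<le> x(1,1)" "x(1,1) \<le> q(1,1)" "0 \<le> x(1,0)" "x(1,0) \<le> q(1,0)"
       "0 \<le> x(0,1)" "x(0,1) \<le> q(0,1)" "0 \<le> x(0,0)" "x(0,0) \<le> q(0,0)"
      unfolding x t_def using q AP h1' h4' h2' h3' by (auto simp: max_def)
    have xs: "x(0,0) + x(0,1) + x(1,0) + x(1,1) = P" unfolding x by simp
    define \<pi> where "\<pi> = (\<lambda>i::nat. if i = 1 then P else 1 - P)"
    have pi: "\<pi> 1 = P" "\<pi> 0 = 1 - P" unfolding \<pi>_def by auto
    show "z \<in> B"
    proof (cases "P = 0")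
      case True
      define X where "X = (\<lambda>j::nat\<times>nat. (if fst j = 1 then S1 else 1 - S1) * (if snd j = 1 then S2 else 1 - S2))"
      define \<chi> where "\<chi> = (\<lambda>i::nat. if i = 1 then X else q)"
      have ch: "\<chi> 1 = X" "\<chi> 0 = q" unfolding \<chi>_def by auto
      have X: "X(0,0) = (1-S1)*(1-S2)" "X(0,1) = (1-S1)*S2" "X(1,0) = S1*(1-S2)" "X(1,1) = S1*S2"
        unfolding X_def by auto
      have Xp: "prob_on (bits\<times>bits) X" unfolding prob_bits2 X using S
        by (auto simp: algebra_simps mult_nonneg_nonneg sq)
      have th: "(\<pi>, \<chi>) \<in> Theta2" unfolding Theta2_iff prob_bits pi ch using Xp assms(1) P by auto
      have m: "\<forall>j\<in>bits \<times> bits. mu \<pi> \<chi> j = q j" unfolding mu_eq pi ch True by simp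
      have c: "chi1 \<chi> 0 0 \<le> chi2 \<chi> 0 0" unfolding chi1_def chi2_def ch using h4' True
        unfolding A_def C_def by simp
      have zz: "z = (\<pi> 1, chi1 \<chi> 1 1, chi2 \<chi> 1 1)" unfolding z pi chi1_def chi2_def ch X
        by (simp add: algebra_simps)
      show ?thesis unfolding B_def using zz th m c by blast
    next
      case False
      hence Pp: "P > 0" using P by auto
      define X where "X = (\<lambda>j. x j / P)"
      define Y where "Y = (\<lambda>j. if P < 1 then (q j - x j) / (1 - P) else if j = (0,0) then 1 else (0::real))"
      define \<chi> where "\<chi> = (\<lambda>i::nat. if i = 1 then X else Y)"
      have ch: "\<chi> 1 = X" "\<chi> 0 = Y" unfolding \<chi>_def by auto
      have Xp: "prob_on (bits\<times>bits) X" unfolding prob_bits2 X_def using xb Pp xs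
        by (auto simp: add_divide_distrib[symmetric])
      have Yp: "prob_on (bits\<times>bits) Y"
      proof (cases "P < 1")
        case True
        have "(q (0,0) - x (0,0)) / (1 - P) + (q (0,1) - x (0,1)) / (1 - P) +
          (q (1,0) - x (1,0)) / (1 - P) + (q (1,1) - x (1,1)) / (1 - P) = 1"
          using True q(5) xs by (simp add: add_divide_distrib[symmetric])
        then show ?thesis unfolding prob_bits2 Y_def using True xb by simp
      next
        case False
        then show ?thesis unfolding prob_bits2 Y_def by simp
      qed
      have th: "(\<pi>, \<chi>) \<in> Theta2" unfolding Theta2_iff prob_bits pi ch using Xp Yp P by auto
      have m: "\<forall>j\<in>bits \<times> bits. mu \<pi> \<chi> j = q j"
      proof (cases "P < 1")
        case True
        then show ?thesis unfolding mu_eq pi ch X_def Y_def using Pp by simp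
      next
        case False
        hence P1: "P = 1" using P by auto
        have "x(0,0) = q(0,0)" "x(0,1) = q(0,1)" "x(1,0) = q(1,0)" "x(1,1) = q(1,1)"
          using xb xs q(5) P1 by linarith+
        then show ?thesis unfolding ball_bits2 mu_eq pi ch X_def P1 by simp
      qed
      have c: "chi1 \<chi> 0 0 \<le> chi2 \<chi> 0 0"
      proof (cases "P < 1")
        case True
        have "q(0,1) - x(0,1) \<le> q(1,0) - x(1,0)" using x h4' by simp
        hence "(q(0,1) - x(0,1)) / (1 - P) \<le> (q(1,0) - x(1,0)) / (1 - P)"
          using True by (simp add: divide_right_mono)
        then show ?thesis unfolding chi1_def chi2_def ch Y_def using True by simp
      next
        case False
        then show ?thesis unfolding chi1_def chi2_def ch Y_def by simp
      qed
      have "chi1 \<chi> 1 1 = (x(1,0) + x(1,1)) / P" unfolding chi1_def ch X_def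
        by (simp add: add_divide_distrib)
      also have "\<dots> = S1" unfolding x A_def using Pp by simp
      finally have e1: "chi1 \<chi> 1 1 = S1" .
      have "chi2 \<chi> 1 1 = (x(0,1) + x(1,1)) / P" unfolding chi2_def ch X_def
        by (simp add: add_divide_distrib)
      also have "\<dots> = S2" unfolding x C_def using Pp by simp
      finally have e2: "chi2 \<chi> 1 1 = S2" .
      have zz: "z = (\<pi> 1, chi1 \<chi> 1 1, chi2 \<chi> 1 1)" unfolding z pi e1 e2 by simp
      show ?thesis unfolding B_def using zz th m c by blast
    qed
  qed
  have eq: "B = ?R" using sub sup by blast
  have "(1, q(1,0) + q(1,1), q(0,1) + q(1,1)) \<in> ?R" using q by auto
  then show ?thesis using eq by blast
qed

end
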